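(* Let $p\ge 1$, let $\Theta$ be a $p\times p$ correlation matrix (real symmetric positive semi-definite with all diagonal entries equal to $1$), and let $\alpha\in\mathbb{R}^p$ with $\alpha_j\neq 0$ for all $j$. Define the $p\times p$ matrix $g(\Theta,\alpha)$ by $g_{ij}(\Theta,\alpha)=\Theta_{ij}\alpha_i\alpha_j$ for $i\neq j$ and $g_{ii}(\Theta,\alpha)=1$; equivalently $g(\Theta,\alpha)=\Theta\circ\alpha\alpha^{t}+I-D_\alpha^2$, where $\circ$ is the Hadamard (entrywise) product and $D_\alpha$ is the diagonal matrix with diagonal entries $\alpha_1,\dots,\alpha_p$. Let $\lambda_p$ be the minimal eigenvalue of $\Theta$, and let $\alpha_M=\max_j|\alpha_j|$ and $\alpha_m=\min_j|\alpha_j|$. If \[\lambda_p\ \ge\ \frac{\alpha_M^2-1}{\alpha_m^2},\] then $g(\Theta,\alpha)$ is positive semi-definite.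
   Context: The map $g$ is called the multiplicative link function. The hypothesis $\alpha_j\neq 0$ for all $j$ only ensures $\alpha_m>0$, so that the quotient in the condition is defined. *)

theory Defs
  imports "HOL-Analysis.Analysis"
begin

definition symmetric_mat :: "real^'n^'n \<Rightarrow> bool" where
  "symmetric_mat A \<longleftrightarrow> transpose A = A"

definition psd_mat :: "real^'n^'n \<Rightarrow> bool" where
  "psd_mat A \<longleftrightarrow> symmetric_mat A \<and> (\<forall>x. 0 \<le> x \<bullet> (A *v x))"

definition correlation_mat :: "real^'n^'n \<Rightarrow> bool" where
  "correlation_mat A \<longleftrightarrow> psd_mat A \<and> (\<forall>i. A $ i $ i = 1)"

definition is_eigenvalue :: "real^'n^'n \<Rightarrow> real \<Rightarrow> bool" where
  "is_eigenvalue A l \<longleftrightarrow> (\<exists>v. v \<noteq> 0 \<and> A *v v = l *\<^sub>R v)"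

definition is_min_eigenvalue :: "real^'n^'n \<Rightarrow> real \<Rightarrow> bool" where
  "is_min_eigenvalue A l \<longleftrightarrow> is_eigenvalue A l \<and> (\<forall>m. is_eigenvalue A m \<longrightarrow> l \<le> m)"

definition link_g :: "real^'n^'n \<Rightarrow> real^'n \<Rightarrow> real^'n^'n" where
  "link_g Theta a = (\<chi> i j. if i = j then 1 else Theta $ i $ j * a $ i * a $ j)"

end

theory Submission
  imports Defs
begin

lemma sym_inner:
  assumes "symmetric_mat A"
  shows "x \<bullet> (A *v y) = y \<bullet> (A *v x)"
proof -
  have "x \<bullet> (A *v y) = (x v* A) \<bullet> y" by (simp add: dot_lmul_matrix)
  also have "x v* A = transpose A *v x" by (simp add: transpose_matrix_vector)
  also have "\<dots> = A *v x" using assms by (simp add: symmetric_mat_def)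
  finally show ?thesis by (simp add: inner_commute)
qed

lemma rayleigh:
  fixes A :: "real^'n^'n"
  assumes "symmetric_mat A"
  shows "\<exists>mu. is_eigenvalue A mu \<and> (\<forall>y. mu * (y \<bullet> y) \<le> y \<bullet> (A *v y))"
proof -
  let ?f = "\<lambda>x::real^'n. x \<bullet> (A *v x)"
  have ne: "sphere (0::real^'n) 1 \<noteq> {}" by (simp add: sphere_eq_empty)
  have cont: "continuous_on (sphere 0 1) ?f"
    by (intro continuous_intros linear_continuous_on matrix_vector_mul_bounded_linear)
  obtain v where v: "v \<in> sphere 0 1" and vmin: "\<And>u. u \<in> sphere 0 1 \<Longrightarrow> ?f v \<le> ?f u"
    using continuous_attains_inf[OF compact_sphere ne cont] by blast
  define mu where "mu = ?f v"
  have vv: "v \<bullet> v = 1" using v by (simp add: norm_eq_1)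
  have q: "mu * (y \<bullet> y) \<le> y \<bullet> (A *v y)" for y
  proof (cases "y = 0")
    case True then show ?thesis by simp
  next
    case False
    define u where "u = (1 / norm y) *\<^sub>R y"
    have u: "u \<in> sphere 0 1" using False by (simp add: u_def)
    have yu: "y = norm y *\<^sub>R u" using False by (simp add: u_def)
    have "y \<bullet> (A *v y) = (norm y)^2 * ?f u"
      by (subst (1 2) yu) (simp add: matrix_vector_mult_scaleR power2_eq_square)
    moreover have "y \<bullet> y = (norm y)^2" by (simp add: power2_norm_eq_inner)
    moreover have "mu \<le> ?f u" using vmin[OF u] by (simp add: mu_def)
    ultimately show ?thesis by (simp add: mult_left_mono mult.commute[of mu])
  qed
  define r where "r = A *v v - mu *\<^sub>R v"
  define Q where "Q = r \<bullet> (A *v r) - mu * (r \<bullet> r)"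
  have Q0: "Q \<ge> 0" using q[of r] by (simp add: Q_def)
  have vr: "v \<bullet> (A *v r) = r \<bullet> (A *v v)" using sym_inner[OF assms] .
  have expand: "0 \<le> 2 * t * (r \<bullet> r) + t^2 * Q" for t :: real
  proof -
    have "0 \<le> (v + t *\<^sub>R r) \<bullet> (A *v (v + t *\<^sub>R r)) - mu * ((v + t *\<^sub>R r) \<bullet> (v + t *\<^sub>R r))"
      using q[of "v + t *\<^sub>R r"] by simp
    also have "\<dots> = (v \<bullet> (A *v v) - mu * (v \<bullet> v)) + 2 * t * (r \<bullet> (A *v v) - mu * (r \<bullet> v)) + t^2 * Q"
      using vr by (simp add: Q_def matrix_vector_right_distrib matrix_vector_mult_scaleR
            inner_add_left inner_add_right inner_commute[of v r] algebra_simps power2_eq_square)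
    also have "r \<bullet> (A *v v) - mu * (r \<bullet> v) = r \<bullet> r" by (simp add: r_def inner_diff_right)
    also have "v \<bullet> (A *v v) - mu * (v \<bullet> v) = 0" using vv by (simp add: mu_def)
    finally show ?thesis by simp
  qed
  have "r \<bullet> r \<le> 0"
  proof (rule ccontr)
    assume "\<not> r \<bullet> r \<le> 0"
    hence R: "r \<bullet> r > 0" by linarith
    define t where "t = - (r \<bullet> r) / (Q + 1)"
    have "0 \<le> 2 * t * (r \<bullet> r) + t^2 * Q" by (rule expand)
    also have "\<dots> = t * (2 * (r \<bullet> r) + t * Q)" by (simp add: power2_eq_square algebra_simps)
    finally have "0 \<le> t * (2 * (r \<bullet> r) + t * Q)" .
    moreover have "t < 0" using R Q0 by (simp add: t_def divide_neg_pos)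
    moreover have "2 * (r \<bullet> r) + t * Q > 0"
    proof -
      have "t * Q = - (r \<bullet> r) * (Q / (Q + 1))" using Q0 by (simp add: t_def field_simps)
      moreover have "Q / (Q + 1) \<le> 1" using Q0 by simp
      ultimately have "t * Q \<ge> - (r \<bullet> r)" using R
        by (metis mult_left_le mult_minus_left neg_le_iff_le less_eq_real_def divide_nonneg_pos Q0 add_pos_nonneg zero_less_one)
      thus ?thesis using R by linarith
    qed
    ultimately show False by (smt (verit) mult_neg_pos)
  qed
  hence "r = 0" using inner_ge_zero[of r] by (simp add: order_antisym)
  hence "A *v v = mu *\<^sub>R v" by (simp add: r_def)
  moreover have "v \<noteq> 0" using v by auto
  ultimately have "is_eigenvalue A mu" unfolding is_eigenvalue_def by blast
  with q show ?thesis by blast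
qed

theorem mainTheorem1:
  fixes Theta :: "real^'n^'n" and alpha :: "real^'n" and lam :: real
  assumes "correlation_mat Theta"
    and "\<forall>j. alpha $ j \<noteq> 0"
    and "is_min_eigenvalue Theta lam"
    and "lam \<ge> ((Max (range (\<lambda>j. \<bar>alpha $ j\<bar>)))\<^sup>2 - 1) / (Min (range (\<lambda>j. \<bar>alpha $ j\<bar>)))\<^sup>2"
  shows "psd_mat (link_g Theta alpha)"
proof -
  have sym: "symmetric_mat Theta" and psd: "\<And>x. 0 \<le> x \<bullet> (Theta *v x)"
    and diag: "\<And>i. Theta $ i $ i = 1"
    using assms(1) by (auto simp: correlation_mat_def psd_mat_def)
  have symij: "Theta $ j $ i = Theta $ i $ j" for i j
    using sym unfolding symmetric_mat_def transpose_def by (metis vec_lambda_beta)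
  obtain mu where mu: "is_eigenvalue Theta mu" and muq: "\<And>y. mu * (y \<bullet> y) \<le> y \<bullet> (Theta *v y)"
    using rayleigh[OF sym] by blast
  have lammu: "lam \<le> mu" using assms(3) mu by (simp add: is_min_eigenvalue_def)
  have lam0: "lam \<ge> 0"
  proof -
    obtain v where v: "v \<noteq> 0" "Theta *v v = lam *\<^sub>R v"
      using assms(3) by (auto simp: is_min_eigenvalue_def is_eigenvalue_def)
    have "0 \<le> v \<bullet> (Theta *v v)" by (rule psd)
    also have "\<dots> = lam * (v \<bullet> v)" using v by simp
    finally have "0 \<le> lam * (v \<bullet> v)" .
    moreover have "v \<bullet> v > 0" using v by simp
    ultimately show ?thesis by (simp add: zero_le_mult_iff)
  qed
  define aM where "aM = Max (range (\<lambda>j. \<bar>alpha $ j\<bar>))"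
  define am where "am = Min (range (\<lambda>j. \<bar>alpha $ j\<bar>))"
  have fin: "finite (range (\<lambda>j. \<bar>alpha $ j\<bar>))" by simp
  have aMi: "\<bar>alpha $ i\<bar> \<le> aM" for i unfolding aM_def by (rule Max_ge[OF fin]) simp
  have ami: "am \<le> \<bar>alpha $ i\<bar>" for i unfolding am_def by (rule Min_le[OF fin]) simp
  have "am \<in> range (\<lambda>j. \<bar>alpha $ j\<bar>)" unfolding am_def by (rule Min_in[OF fin]) simp
  hence am0: "am > 0" using assms(2) by auto
  have hyp: "lam * am^2 \<ge> aM^2 - 1"
    using assms(4) am0 by (simp add: aM_def[symmetric] am_def[symmetric] pos_divide_le_eq)
  have coef: "lam * (alpha $ i)^2 + 1 - (alpha $ i)^2 \<ge> 0" for i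
  proof (cases "lam \<ge> 1")
    case True
    have "(alpha $ i)^2 \<le> lam * (alpha $ i)^2" using True by (simp add: mult_right_mono[of 1 lam, simplified])
    thus ?thesis by simp
  next
    case False
    have sq1: "(alpha $ i)^2 \<le> aM^2"
      using aMi[of i] by (metis abs_ge_zero power2_abs power_mono)
    have sq2: "am^2 \<le> aM^2"
      using ami[of i] aMi[of i] am0 by (simp add: power_mono)
    have "(1 - lam) * (alpha $ i)^2 \<le> (1 - lam) * aM^2" using False sq1 by (simp add: mult_left_mono)
    moreover have "lam * am^2 \<le> lam * aM^2" using lam0 sq2 by (simp add: mult_left_mono)
    ultimately have "(1 - lam) * (alpha $ i)^2 \<le> 1" using hyp by (simp add: algebra_simps)
    thus ?thesis by (simp add: algebra_simps)
  qed
  let ?G = "link_g Theta alpha"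
  have Gsym: "symmetric_mat ?G"
    unfolding symmetric_mat_def transpose_def link_g_def
    by (simp add: vec_eq_iff symij mult.commute mult.left_commute eq_commute)
  have quad: "0 \<le> x \<bullet> (?G *v x)" for x
  proof -
    define y where "y = (\<chi> i. alpha $ i * x $ i)"
    have row: "(?G *v x) $ i = alpha $ i * (Theta *v y) $ i + (1 - (alpha $ i)^2) * x $ i" for i
    proof -
      have "(?G *v x) $ i = (\<Sum>j\<in>UNIV. Theta $ i $ j * alpha $ i * alpha $ j * x $ j
              + (if j = i then (1 - (alpha $ i)^2) * x $ i else 0))"
        unfolding matrix_vector_mult_def link_g_def
        by (intro trans[OF vec_lambda_beta] sum.cong refl) (auto simp: diag power2_eq_square algebra_simps)
      also have "\<dots> = alpha $ i * (Theta *v y) $ i + (1 - (alpha $ i)^2) * x $ i"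
        by (simp add: sum.distrib matrix_vector_mult_def y_def sum_distrib_left algebra_simps)
      finally show ?thesis .
    qed
    have "x \<bullet> (?G *v x) = (\<Sum>i\<in>UNIV. y $ i * (Theta *v y) $ i + (1 - (alpha $ i)^2) * (x $ i)^2)"
      unfolding inner_vec_def row by (intro sum.cong refl) (simp add: y_def algebra_simps power2_eq_square)
    also have "\<dots> = y \<bullet> (Theta *v y) + (\<Sum>i\<in>UNIV. (1 - (alpha $ i)^2) * (x $ i)^2)"
      by (simp add: sum.distrib inner_vec_def)
    also have "\<dots> \<ge> lam * (y \<bullet> y) + (\<Sum>i\<in>UNIV. (1 - (alpha $ i)^2) * (x $ i)^2)"
    proof -
      have "lam * (y \<bullet> y) \<le> mu * (y \<bullet> y)" using lammu by (simp add: mult_right_mono)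
      thus ?thesis using muq[of y] by simp
    qed
    also have "lam * (y \<bullet> y) + (\<Sum>i\<in>UNIV. (1 - (alpha $ i)^2) * (x $ i)^2)
       = (\<Sum>i\<in>UNIV. (lam * (alpha $ i)^2 + 1 - (alpha $ i)^2) * (x $ i)^2)"
      by (simp add: inner_vec_def y_def sum_distrib_left sum.distrib[symmetric] algebra_simps power2_eq_square)
    also have "\<dots> \<ge> 0" by (intro sum_nonneg mult_nonneg_nonneg coef) simp
    finally show ?thesis .
  qed
  show ?thesis using Gsym quad by (simp add: psd_mat_def)
qed

end
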